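(* For every integer $S\ge1$, with $R=2S+1$, one has $\Vert T_R\Vert^2<\pi^2-\dfrac{6}{S+1}$. Moreover, for every integer $R\ge1$, $\pi-\Vert T_R\Vert\ge\dfrac{\pi}{2R}$.
   Context: $T_R$ is the $R\times R$ matrix with $(T_R)_{m,n}=0$ if $m=n$ and $(T_R)_{m,n}=\frac{1}{m-n}$ if $m\ne n$, $1\le m,n\le R$. $\Vert\cdot\Vert$ is the operator norm induced by the Euclidean norm. *)

theory Defs
  imports "HOL-Analysis.Analysis"
begin

definition Tmat :: "nat \<Rightarrow> nat \<Rightarrow> real" where
  "Tmat m n = (if m = n then 0 else 1 / (real_of_int (int m - int n)))"

definition mat_opnorm :: "nat \<Rightarrow> (nat \<Rightarrow> nat \<Rightarrow> real) \<Rightarrow> real" where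
  "mat_opnorm R A = Sup {sqrt (\<Sum>m\<in>{1..R}. (\<Sum>n\<in>{1..R}. A m n * x n)\<^sup>2) | x.
                          (\<Sum>n\<in>{1..R}. (x n)\<^sup>2) \<le> 1}"

end

theory Submission
  imports Defs
begin

lemma Tmat_diag[simp]: "Tmat n n = 0" by (simp add: Tmat_def)

lemma Tmat_skew: "Tmat m n = - Tmat n m"
  by (simp add: Tmat_def) (metis minus_diff_eq minus_divide_right)

lemma Tmat_sq: "(Tmat m n)\<^sup>2 = (Tmat n m)\<^sup>2"
  by (metis Tmat_skew power2_minus)

lemma pf: "n \<noteq> n' \<Longrightarrow> Tmat m n * Tmat m n' = Tmat n n' * (Tmat m n - Tmat m n') + (if m = n \<or> m = n' then (Tmat n n')\<^sup>2 else 0)"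
proof (cases "m = n \<or> m = n'")
  case True
  have "Tmat n' n = - Tmat n n'" by (rule Tmat_skew)
  with True show ?thesis by (auto simp: power2_eq_square)
next
  case False
  assume "n \<noteq> n'"
  with False show ?thesis by (auto simp: Tmat_def power2_eq_square field_simps)
qed

definition Tv :: "nat \<Rightarrow> (nat \<Rightarrow> real) \<Rightarrow> nat \<Rightarrow> real" where
  "Tv R x m = (\<Sum>n\<in>{1..R}. Tmat m n * x n)"
definition fq :: "nat \<Rightarrow> (nat \<Rightarrow> real) \<Rightarrow> real" where
  "fq R x = (\<Sum>m\<in>{1..R}. (Tv R x m)\<^sup>2)"
definition nr :: "nat \<Rightarrow> (nat \<Rightarrow> real) \<Rightarrow> real" where
  "nr R x = (\<Sum>n\<in>{1..R}. (x n)\<^sup>2)"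
definition Qd :: "nat \<Rightarrow> nat \<Rightarrow> real" where
  "Qd R n = (\<Sum>m\<in>{1..R}. (Tmat m n)\<^sup>2)"
definition Sc :: "nat \<Rightarrow> nat \<Rightarrow> real" where
  "Sc R n = (\<Sum>m\<in>{1..R}. Tmat m n)"
definition Gq :: "nat \<Rightarrow> (nat \<Rightarrow> real) \<Rightarrow> real" where
  "Gq R z = (\<Sum>n\<in>{1..R}. Qd R n * (z n)\<^sup>2) + 2 * (\<Sum>n\<in>{1..R}. \<Sum>n'\<in>{1..R}. (Tmat n n')\<^sup>2 * z n * z n')"

lemma Pform: assumes "n \<in> {1..R}" "n' \<in> {1..R}"
  shows "(\<Sum>m\<in>{1..R}. Tmat m n * Tmat m n') = (if n = n' then Qd R n else 0) + 2 * (Tmat n n')\<^sup>2 + Tmat n n' * (Sc R n - Sc R n')"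
proof (cases "n = n'")
  case True
  then show ?thesis by (simp add: Qd_def power2_eq_square)
next
  case False
  have "(\<Sum>m\<in>{1..R}. Tmat m n * Tmat m n') = (\<Sum>m\<in>{1..R}. Tmat n n' * (Tmat m n - Tmat m n') + ((if m = n then (Tmat n n')\<^sup>2 else 0) + (if m = n' then (Tmat n n')\<^sup>2 else 0)))"
    using False by (intro sum.cong refl) (auto simp: pf)
  also have "\<dots> = Tmat n n' * (Sc R n - Sc R n') + 2 * (Tmat n n')\<^sup>2"
    using assms by (simp add: sum.distrib sum_distrib_left sum_subtractf Sc_def algebra_simps)
  finally show ?thesis using False by simp
qed

lemma fq_expand: "fq R z = (\<Sum>n\<in>{1..R}. \<Sum>n'\<in>{1..R}. z n * z n' * (\<Sum>m\<in>{1..R}. Tmat m n * Tmat m n'))"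
proof -
  have "fq R z = (\<Sum>m\<in>{1..R}. \<Sum>n\<in>{1..R}. \<Sum>n'\<in>{1..R}. (Tmat m n * z n) * (Tmat m n' * z n'))"
    by (simp add: fq_def Tv_def power2_eq_square sum_product)
  also have "\<dots> = (\<Sum>n\<in>{1..R}. \<Sum>m\<in>{1..R}. \<Sum>n'\<in>{1..R}. (Tmat m n * z n) * (Tmat m n' * z n'))"
    by (rule sum.swap)
  also have "\<dots> = (\<Sum>n\<in>{1..R}. \<Sum>n'\<in>{1..R}. \<Sum>m\<in>{1..R}. (Tmat m n * z n) * (Tmat m n' * z n'))"
    by (intro sum.cong refl sum.swap)
  also have "\<dots> = (\<Sum>n\<in>{1..R}. \<Sum>n'\<in>{1..R}. z n * z n' * (\<Sum>m\<in>{1..R}. Tmat m n * Tmat m n'))"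
    by (simp add: sum_distrib_left mult_ac)
  finally show ?thesis .
qed

lemma colsum: "(\<Sum>n\<in>{1..R}. Tmat n k * z n) = - Tv R z k"
  unfolding Tv_def sum_negf[symmetric]
  by (intro sum.cong refl) (metis Tmat_skew minus_mult_left)

lemma fq_ident: "fq R z = Gq R z + 2 * (\<Sum>n\<in>{1..R}. Sc R n * z n * Tv R z n)"
proof -
  have "fq R z = (\<Sum>n\<in>{1..R}. \<Sum>n'\<in>{1..R}. z n * z n' * ((if n = n' then Qd R n else 0) + 2 * (Tmat n n')\<^sup>2 + Tmat n n' * (Sc R n - Sc R n')))"
    unfolding fq_expand by (intro sum.cong refl, subst Pform, assumption, assumption, rule refl)
  also have "\<dots> = (\<Sum>n\<in>{1..R}. \<Sum>n'\<in>{1..R}. (if n = n' then Qd R n * (z n)\<^sup>2 else 0) + 2 * ((Tmat n n')\<^sup>2 * z n * z n') + Sc R n * z n * (Tmat n n' * z n') - Sc R n' * z n' * (Tmat n n' * z n))"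
    by (intro sum.cong refl) (auto simp: algebra_simps power2_eq_square)
  also have "\<dots> = (\<Sum>n\<in>{1..R}. \<Sum>n'\<in>{1..R}. (if n = n' then Qd R n * (z n)\<^sup>2 else 0))
     + 2 * (\<Sum>n\<in>{1..R}. \<Sum>n'\<in>{1..R}. (Tmat n n')\<^sup>2 * z n * z n')
     + (\<Sum>n\<in>{1..R}. \<Sum>n'\<in>{1..R}. Sc R n * z n * (Tmat n n' * z n'))
     - (\<Sum>n\<in>{1..R}. \<Sum>n'\<in>{1..R}. Sc R n' * z n' * (Tmat n n' * z n))"
    by (simp only: sum.distrib sum_subtractf sum_distrib_left)
  also have "(\<Sum>n\<in>{1..R}. \<Sum>n'\<in>{1..R}. (if n = n' then Qd R n * (z n)\<^sup>2 else 0)) = (\<Sum>n\<in>{1..R}. Qd R n * (z n)\<^sup>2)"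
    by simp
  also have "(\<Sum>n\<in>{1..R}. \<Sum>n'\<in>{1..R}. Sc R n * z n * (Tmat n n' * z n')) = (\<Sum>n\<in>{1..R}. Sc R n * z n * Tv R z n)"
    by (simp add: Tv_def sum_distrib_left)
  also have "(\<Sum>n\<in>{1..R}. \<Sum>n'\<in>{1..R}. Sc R n' * z n' * (Tmat n n' * z n)) = (\<Sum>n'\<in>{1..R}. \<Sum>n\<in>{1..R}. Sc R n' * z n' * (Tmat n n' * z n))"
    by (rule sum.swap)
  also have "\<dots> = (\<Sum>n'\<in>{1..R}. Sc R n' * z n' * (\<Sum>n\<in>{1..R}. Tmat n n' * z n))"
    by (simp only: sum_distrib_left)
  also have "\<dots> = (\<Sum>n'\<in>{1..R}. Sc R n' * z n' * (- Tv R z n'))"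
    by (simp only: colsum)
  also have "\<dots> = - (\<Sum>n\<in>{1..R}. Sc R n * z n * Tv R z n)"
    by (simp add: sum_negf)
  finally show ?thesis by (simp add: Gq_def)
qed

lemma Qd_alt: "Qd R n = (\<Sum>m\<in>{1..R}. (Tmat n m)\<^sup>2)"
  unfolding Qd_def by (simp add: Tmat_sq)

lemma Gq_le: assumes "\<forall>n\<in>{1..R}. Qd R n \<le> c" shows "Gq R z \<le> 3 * c * nr R z"
proof -
  have "2 * (\<Sum>n\<in>{1..R}. \<Sum>n'\<in>{1..R}. (Tmat n n')\<^sup>2 * z n * z n')
     \<le> (\<Sum>n\<in>{1..R}. \<Sum>n'\<in>{1..R}. (Tmat n n')\<^sup>2 * (z n)\<^sup>2 + (Tmat n n')\<^sup>2 * (z n')\<^sup>2)"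
    unfolding sum_distrib_left
  proof (intro sum_mono)
    fix n n'
    have "2 * (z n * z n') \<le> (z n)\<^sup>2 + (z n')\<^sup>2" using sum_squares_bound[of "z n" "z n'"] by (simp add: mult.assoc)
    hence "(Tmat n n')\<^sup>2 * (2 * (z n * z n')) \<le> (Tmat n n')\<^sup>2 * ((z n)\<^sup>2 + (z n')\<^sup>2)"
      by (intro mult_left_mono) auto
    thus "2 * ((Tmat n n')\<^sup>2 * z n * z n') \<le> (Tmat n n')\<^sup>2 * (z n)\<^sup>2 + (Tmat n n')\<^sup>2 * (z n')\<^sup>2"
      by (simp add: algebra_simps)
  qed
  also have "\<dots> = (\<Sum>n\<in>{1..R}. \<Sum>n'\<in>{1..R}. (Tmat n n')\<^sup>2 * (z n)\<^sup>2) + (\<Sum>n\<in>{1..R}. \<Sum>n'\<in>{1..R}. (Tmat n n')\<^sup>2 * (z n')\<^sup>2)"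
    by (simp add: sum.distrib)
  also have "(\<Sum>n\<in>{1..R}. \<Sum>n'\<in>{1..R}. (Tmat n n')\<^sup>2 * (z n)\<^sup>2) = (\<Sum>n\<in>{1..R}. Qd R n * (z n)\<^sup>2)"
    by (simp add: Qd_alt sum_distrib_right)
  also have "(\<Sum>n\<in>{1..R}. \<Sum>n'\<in>{1..R}. (Tmat n n')\<^sup>2 * (z n')\<^sup>2) = (\<Sum>n'\<in>{1..R}. \<Sum>n\<in>{1..R}. (Tmat n n')\<^sup>2 * (z n')\<^sup>2)"
    by (rule sum.swap)
  also have "\<dots> = (\<Sum>n\<in>{1..R}. Qd R n * (z n)\<^sup>2)"
    by (simp add: Qd_def sum_distrib_right)
  finally have "Gq R z \<le> 3 * (\<Sum>n\<in>{1..R}. Qd R n * (z n)\<^sup>2)"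
    unfolding Gq_def by linarith
  also have "\<dots> \<le> 3 * (\<Sum>n\<in>{1..R}. c * (z n)\<^sup>2)"
    using assms by (intro mult_left_mono sum_mono mult_right_mono) auto
  finally show ?thesis by (simp add: nr_def sum_distrib_left mult.assoc)
qed

lemma Tv_scale: "Tv R (\<lambda>n. a * x n) m = a * Tv R x m"
  unfolding Tv_def sum_distrib_left by (intro sum.cong refl) (simp add: mult_ac)
lemma fq_scale: "fq R (\<lambda>n. a * x n) = a\<^sup>2 * fq R x"
  unfolding fq_def Tv_scale power_mult_distrib sum_distrib_left ..
lemma nr_scale: "nr R (\<lambda>n. a * x n) = a\<^sup>2 * nr R x"
  by (simp add: nr_def sum_distrib_left power_mult_distrib)

lemma nr_zero: "nr R x = 0 \<Longrightarrow> fq R x = 0"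
proof -
  assume "nr R x = 0"
  hence "\<forall>n\<in>{1..R}. (x n)\<^sup>2 = 0" unfolding nr_def
    by (subst sum_nonneg_eq_0_iff[symmetric]) auto
  hence "\<forall>m. Tv R x m = 0" by (simp add: Tv_def)
  thus ?thesis by (simp add: fq_def)
qed

lemma nr_nonneg: "nr R x \<ge> 0" by (simp add: nr_def sum_nonneg)
lemma fq_nonneg: "fq R x \<ge> 0" by (simp add: fq_def sum_nonneg)

lemma Tv_restrict: "Tv R (restrict x {1..R}) m = Tv R x m"
  unfolding Tv_def by (intro sum.cong refl) auto
lemma fq_restrict: "fq R (restrict x {1..R}) = fq R x"
  unfolding fq_def Tv_restrict ..
lemma nr_restrict: "nr R (restrict x {1..R}) = nr R x"
  unfolding nr_def by (intro sum.cong refl) auto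

lemma cont_proj: "k \<in> {1..R} \<Longrightarrow> continuous_map (product_topology (\<lambda>_. euclideanreal) {1..R}) euclideanreal (\<lambda>x. x k)"
  using continuous_map_product_projection[of k "{1..R}" "\<lambda>_. euclideanreal"] by simp

lemma cont_nr: "continuous_map (product_topology (\<lambda>_. euclideanreal) {1..R}) euclideanreal (nr R)"
  unfolding nr_def by (intro continuous_map_sum continuous_map_real_pow cont_proj) auto

lemma cont_fq: "continuous_map (product_topology (\<lambda>_. euclideanreal) {1..R}) euclideanreal (fq R)"
  unfolding fq_def Tv_def by (intro continuous_map_sum continuous_map_real_pow continuous_map_real_mult_left cont_proj) auto

lemma exists_max: "\<exists>x0. nr R x0 \<le> 1 \<and> (\<forall>x. nr R x \<le> 1 \<longrightarrow> fq R x \<le> fq R x0)"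
proof -
  define X where "X = product_topology (\<lambda>_::nat. euclideanreal) {1..R}"
  define K where "K = PiE {1..R} (\<lambda>_. {-1..1::real})"
  define C where "C = {x \<in> topspace X. nr R x \<in> {..1}}"
  have "compactin X K" unfolding X_def K_def by (simp add: compactin_PiE)
  moreover have "closedin X C" unfolding C_def X_def
    by (rule closedin_continuous_map_preimage[OF cont_nr]) simp
  ultimately have "compactin X (C \<inter> K)" by (intro closed_Int_compactin)
  hence "compactin euclideanreal (fq R ` (C \<inter> K))"
    using cont_fq unfolding X_def by (intro image_compactin) auto
  hence cpt: "compact (fq R ` (C \<inter> K))" by simp
  have memK: "restrict x {1..R} \<in> C \<inter> K" if "nr R x \<le> 1" for x
  proof -
    have "\<bar>x n\<bar> \<le> 1" if "n \<in> {1..R}" for n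
    proof -
      have "(x n)\<^sup>2 \<le> nr R x" unfolding nr_def
        using that by (intro member_le_sum) auto
      hence "(x n)\<^sup>2 \<le> 1" using \<open>nr R x \<le> 1\<close> by simp
      thus ?thesis by (simp add: abs_square_le_1)
    qed
    hence "restrict x {1..R} \<in> K" unfolding K_def by (auto simp: abs_le_iff)
    moreover have "nr R (restrict x {1..R}) \<le> 1" by (simp only: nr_restrict that)
    hence "restrict x {1..R} \<in> C" unfolding C_def X_def by auto
    ultimately show ?thesis by blast
  qed
  have "restrict (\<lambda>_. 0) {1..R} \<in> C \<inter> K" using memK[of "\<lambda>_. 0"] by (simp add: nr_def)
  hence "fq R ` (C \<inter> K) \<noteq> {}" by blast
  from compact_attains_sup[OF cpt this] obtain x0 where x0: "x0 \<in> C \<inter> K"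
    and mx: "\<forall>y\<in>fq R ` (C \<inter> K). y \<le> fq R x0" by auto
  have "nr R x0 \<le> 1" using x0 unfolding C_def by auto
  moreover have "fq R x \<le> fq R x0" if "nr R x \<le> 1" for x
  proof -
    have "fq R (restrict x {1..R}) \<le> fq R x0" using mx memK[OF that] by blast
    thus ?thesis by (simp only: fq_restrict)
  qed
  ultimately show ?thesis by blast
qed

lemma quad_zero: fixes a h :: real assumes "\<forall>t. 0 \<le> 2*t*h + t\<^sup>2*a" shows "h = 0"
proof -
  have "0 \<le> 2*h + a" "0 \<le> -2*h + a" using assms[rule_format, of 1] assms[rule_format, of "-1"] by auto
  hence a: "a \<ge> 0" by linarith
  define t where "t = -h/(a+1)"
  have "0 \<le> 2*t*h + t\<^sup>2*a" using assms by blast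
  hence "0 \<le> (2*t*h + t\<^sup>2*a) * (a+1)\<^sup>2" using a by simp
  also have "(2*t*h + t\<^sup>2*a) * (a+1)\<^sup>2 = 2*h*(t*(a+1))*(a+1) + (t*(a+1))\<^sup>2*a"
    by (simp add: power2_eq_square algebra_simps)
  also have "t*(a+1) = -h" using a unfolding t_def by simp
  also have "2*h*(-h)*(a+1) + (-h)\<^sup>2*a = - h\<^sup>2 * (a+2)"
    by (simp add: power2_eq_square algebra_simps)
  finally have "h\<^sup>2 * (a+2) \<le> 0" by simp
  moreover have "h\<^sup>2 * (a+2) \<ge> 0" using a by simp
  ultimately have "h\<^sup>2 * (a+2) = 0" by linarith
  thus ?thesis using a by simp
qed

lemma hom_bound: assumes "\<forall>x. nr R x \<le> 1 \<longrightarrow> fq R x \<le> mu" "mu \<ge> 0"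
  shows "fq R x \<le> mu * nr R x"
proof (cases "nr R x = 0")
  case True thus ?thesis by (simp add: nr_zero)
next
  case False
  hence pos: "nr R x > 0" using nr_nonneg[of R x] by linarith
  define a where "a = 1 / sqrt (nr R x)"
  have a2: "a\<^sup>2 = 1 / nr R x" using pos by (simp add: a_def power_divide)
  have "nr R (\<lambda>n. a * x n) = 1" using pos by (simp add: nr_scale a2)
  hence "fq R (\<lambda>n. a * x n) \<le> mu" using assms by simp
  hence "fq R x / nr R x \<le> mu" by (simp add: fq_scale a2)
  thus ?thesis using pos by (simp add: divide_le_eq mult.commute)
qed

lemma Tv_pert: "k \<in> {1..R} \<Longrightarrow> Tv R (\<lambda>n. x n + t * (if n = k then 1 else 0)) m = Tv R x m + t * Tmat m k"
proof -
  assume k: "k \<in> {1..R}"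
  have "Tv R (\<lambda>n. x n + t * (if n = k then 1 else 0)) m = (\<Sum>n\<in>{1..R}. Tmat m n * x n + (if n = k then t * Tmat m k else 0))"
    unfolding Tv_def by (intro sum.cong refl) (auto simp: algebra_simps)
  also have "\<dots> = Tv R x m + t * Tmat m k"
    using k by (simp only: sum.distrib Tv_def sum.delta finite_atLeastAtMost if_True)
  finally show ?thesis .
qed

lemma eigen:
  assumes hom: "\<forall>x. fq R x \<le> mu * nr R x" and x0: "fq R x0 = mu" "nr R x0 = 1" and k: "k \<in> {1..R}"
  shows "(\<Sum>m\<in>{1..R}. Tmat m k * Tv R x0 m) = mu * x0 k"
proof -
  define g where "g = (\<Sum>m\<in>{1..R}. Tmat m k * Tv R x0 m)"
  define q where "q = (\<Sum>m\<in>{1..R}. (Tmat m k)\<^sup>2)"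
  have "0 \<le> 2*t*(mu * x0 k - g) + t\<^sup>2*(mu - q)" for t
  proof -
    let ?xt = "\<lambda>n. x0 n + t * (if n = k then 1 else 0)"
    have f: "fq R ?xt = fq R x0 + 2*t*g + t\<^sup>2*q"
      unfolding fq_def Tv_pert[OF k] g_def q_def
      by (simp add: power2_sum sum.distrib sum_distrib_left algebra_simps power_mult_distrib)
    have n: "nr R ?xt = nr R x0 + 2*t*x0 k + t\<^sup>2"
    proof -
      have "nr R ?xt = (\<Sum>n\<in>{1..R}. (x0 n)\<^sup>2 + (if n = k then 2*t*x0 k + t\<^sup>2 else 0))"
        unfolding nr_def by (intro sum.cong refl) (auto simp: power2_sum algebra_simps)
      also have "\<dots> = nr R x0 + (2*t*x0 k + t\<^sup>2)"
        using k by (simp only: sum.distrib nr_def sum.delta finite_atLeastAtMost if_True)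
      finally show ?thesis by simp
    qed
    have "fq R ?xt \<le> mu * nr R ?xt" using hom by blast
    thus ?thesis unfolding f n x0 by (simp add: algebra_simps)
  qed
  hence "mu * x0 k - g = 0" by (intro quad_zero) blast
  thus ?thesis unfolding g_def by simp
qed

lemma fq_bound:
  assumes Q: "\<forall>n\<in>{1..R}. Qd R n \<le> c" and c: "c \<ge> 0"
  shows "fq R x \<le> 3 * c * nr R x"
proof -
  obtain x0 where x0n: "nr R x0 \<le> 1" and mx: "\<forall>x. nr R x \<le> 1 \<longrightarrow> fq R x \<le> fq R x0"
    using exists_max by blast
  define mu where "mu = fq R x0"
  have mu0: "mu \<ge> 0" unfolding mu_def by (rule fq_nonneg)
  have hom: "\<forall>x. fq R x \<le> mu * nr R x"
    using hom_bound[of R mu] mx mu0 unfolding mu_def by blast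
  have "mu \<le> 3 * c"
  proof (cases "mu = 0")
    case True thus ?thesis using c by simp
  next
    case False
    hence mupos: "mu > 0" using mu0 by simp
    have "mu \<le> mu * nr R x0" using hom unfolding mu_def by blast
    hence x01: "nr R x0 = 1" using mupos x0n by (simp add: mult_le_cancel_left1)
    define y where "y = Tv R x0"
    have eig: "(\<Sum>m\<in>{1..R}. Tmat m k * y m) = mu * x0 k" if "k \<in> {1..R}" for k
      unfolding y_def using eigen[OF hom _ x01 that] mu_def by simp
    have Ty: "Tv R y k = - (mu * x0 k)" if "k \<in> {1..R}" for k
      using colsum[where R=R and k=k and z=y] eig[OF that] by simp
    have fqy: "fq R y = mu\<^sup>2"
    proof -
      have "fq R y = (\<Sum>k\<in>{1..R}. mu\<^sup>2 * (x0 k)\<^sup>2)"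
        unfolding fq_def by (intro sum.cong refl) (simp add: Ty power_mult_distrib)
      also have "\<dots> = mu\<^sup>2" using x01 by (simp add: nr_def sum_distrib_left[symmetric])
      finally show ?thesis .
    qed
    have nry: "nr R y = mu" unfolding nr_def y_def mu_def fq_def ..
    have id1: "mu = Gq R x0 + 2 * (\<Sum>n\<in>{1..R}. Sc R n * x0 n * y n)"
      using fq_ident[of R x0] unfolding mu_def y_def .
    have "(\<Sum>n\<in>{1..R}. Sc R n * y n * Tv R y n) = (\<Sum>n\<in>{1..R}. - mu * (Sc R n * x0 n * y n))"
      by (intro sum.cong refl) (simp add: Ty)
    also have "\<dots> = - mu * (\<Sum>n\<in>{1..R}. Sc R n * x0 n * y n)" by (simp add: sum_distrib_left)
    finally have id2: "mu\<^sup>2 = Gq R y - 2 * mu * (\<Sum>n\<in>{1..R}. Sc R n * x0 n * y n)"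
      using fq_ident[of R y] fqy by simp
    have "2 * mu\<^sup>2 = mu * Gq R x0 + Gq R y"
      using id1 id2 by (simp add: power2_eq_square algebra_simps)
    also have "\<dots> \<le> mu * (3 * c * nr R x0) + 3 * c * nr R y"
      using Gq_le[OF Q, of x0] Gq_le[OF Q, of y] mupos by (intro add_mono mult_left_mono) auto
    also have "\<dots> = mu * (6 * c)" using x01 nry by simp
    finally have "mu * (2 * mu) \<le> mu * (6 * c)" by (simp add: power2_eq_square)
    hence "2 * mu \<le> 6 * c" using mupos by simp
    thus ?thesis by simp
  qed
  have "fq R x \<le> mu * nr R x" using hom by blast
  also have "\<dots> \<le> 3 * c * nr R x" using \<open>mu \<le> 3 * c\<close> nr_nonneg[of R x] by (intro mult_right_mono) auto
  finally show ?thesis .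
qed

lemma opnorm_bound:
  assumes Q: "\<forall>n\<in>{1..R}. Qd R n \<le> c" and c: "c \<ge> 0"
  shows "mat_opnorm R Tmat \<le> sqrt (3 * c)" "mat_opnorm R Tmat \<ge> 0"
proof -
  define A where "A = {sqrt (\<Sum>m\<in>{1..R}. (\<Sum>n\<in>{1..R}. Tmat m n * x n)\<^sup>2) | x.
                          (\<Sum>n\<in>{1..R}. (x n)\<^sup>2) \<le> 1}"
  have A: "A = {sqrt (fq R x) | x. nr R x \<le> 1}" unfolding A_def fq_def Tv_def nr_def ..
  have ub: "a \<le> sqrt (3 * c)" if "a \<in> A" for a
  proof -
    from that obtain x where a: "a = sqrt (fq R x)" and x: "nr R x \<le> 1" unfolding A by blast
    have "fq R x \<le> 3 * c * nr R x" by (rule fq_bound[OF Q c])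
    also have "\<dots> \<le> 3 * c" using x c by (simp add: mult_left_le)
    finally show ?thesis unfolding a by simp
  qed
  have z: "sqrt (fq R (\<lambda>_. 0)) \<in> A" unfolding A by (force simp: nr_def)
  have "fq R (\<lambda>_. 0) = 0" by (simp add: fq_def Tv_def)
  hence z0: "0 \<in> A" using z by simp
  have eq: "mat_opnorm R Tmat = Sup A" unfolding mat_opnorm_def A_def ..
  show "mat_opnorm R Tmat \<le> sqrt (3 * c)" unfolding eq using z0 ub by (intro cSup_least) auto
  show "mat_opnorm R Tmat \<ge> 0" unfolding eq using z0 ub by (intro cSup_upper bdd_aboveI) auto
qed


lemma b1: fixes y::real assumes "y > 0" shows "1 / y\<^sup>2 + 1 / (y + 1) - 1 / y = 1 / (y\<^sup>2 * (y + 1))"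
proof -
  have "y \<noteq> 0" "y + 1 \<noteq> 0" using assms by auto
  thus ?thesis by (simp add: divide_simps) (simp add: algebra_simps power2_eq_square)
qed
lemma b2: fixes y::real assumes "y > 0" shows "1 / y - (1 / (y+1)\<^sup>2 + 1 / (y + 1)) = 1 / ((y+1)\<^sup>2 * y)"
proof -
  have "y \<noteq> 0" "y + 1 \<noteq> 0" using assms by auto
  thus ?thesis by (simp add: divide_simps) (simp add: algebra_simps power2_eq_square)
qed
definition H2 :: "nat \<Rightarrow> real" where "H2 k = (\<Sum>j<k. 1 / (real j + 1)\<^sup>2)"

lemma H2_lim: "H2 \<longlonglongrightarrow> pi\<^sup>2 / 6"
  using inverse_squares_sums unfolding sums_def H2_def by (simp add: add.commute)

lemma H2_Suc: "H2 (Suc k) = H2 k + 1 / (real k + 1)\<^sup>2" by (simp add: H2_def)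

lemma H2_upper: "H2 k + 1 / (real k + 1) < pi\<^sup>2 / 6"
proof -
  define h where "h k = H2 k + 1 / (real k + 1)" for k
  have step: "h k < h (Suc k)" for k
  proof -
    have "1 / (real k + 1) < 1 / (real k + 1)\<^sup>2 + 1 / (real k + 2)"
    proof -
      have "1 / (real k + 1)\<^sup>2 + 1 / (real k + 2) - 1 / (real k + 1) = 1 / ((real k + 1)\<^sup>2 * (real k + 2))"
        using b1[of "real k + 1"] by (simp add: add.assoc)
      moreover have "1 / ((real k + 1)\<^sup>2 * (real k + 2)) > 0" by simp
      ultimately show ?thesis by linarith
    qed
    thus ?thesis unfolding h_def H2_Suc by (simp add: add.commute)
  qed
  hence "incseq h" by (intro incseq_SucI less_imp_le)
  moreover have "h \<longlonglongrightarrow> pi\<^sup>2 / 6 + 0" unfolding h_def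
    by (intro tendsto_add H2_lim) real_asymp
  ultimately have "h (Suc k) \<le> pi\<^sup>2 / 6" by (intro incseq_le) auto
  with step[of k] show ?thesis unfolding h_def by simp
qed

lemma pi2_upper: "pi\<^sup>2 \<le> 21 / 2"
proof -
  define g where "g k = H2 (Suc k) + 1 / (real k + 1)" for k
  have "g (Suc k) \<le> g k" for k
  proof -
    have "1 / (real k + 2)\<^sup>2 + 1 / (real k + 2) \<le> 1 / (real k + 1)"
    proof -
      have "1 / (real k + 1) - (1 / (real k + 2)\<^sup>2 + 1 / (real k + 2)) = 1 / ((real k + 2)\<^sup>2 * (real k + 1))"
        using b2[of "real k + 1"] by (simp add: add.assoc)
      moreover have "1 / ((real k + 2)\<^sup>2 * (real k + 1)) > 0" by simp
      ultimately show ?thesis by linarith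
    qed
    thus ?thesis unfolding g_def H2_Suc by (simp add: add.assoc add.commute)
  qed
  hence "decseq g" by (intro decseq_SucI)
  moreover have "g \<longlonglongrightarrow> pi\<^sup>2 / 6 + 0" unfolding g_def
    by (intro tendsto_add filterlim_compose[OF H2_lim filterlim_Suc]) real_asymp
  ultimately have "pi\<^sup>2 / 6 \<le> g 1" by (intro decseq_ge) auto
  also have "g 1 = 7/4" by (simp add: g_def H2_def eval_nat_numeral)
  finally show ?thesis by simp
qed

lemma Qd_H2: assumes "1 \<le> n" "n \<le> R" shows "Qd R n = H2 (n-1) + H2 (R-n)"
proof -
  have u: "{1..R} = {1..<n} \<union> {n..R}" using assms by auto
  have u2: "{n..R} = insert n {Suc n..R}" using assms by auto
  have "Qd R n = (\<Sum>m\<in>{1..<n}. (Tmat m n)\<^sup>2) + (\<Sum>m\<in>{Suc n..R}. (Tmat m n)\<^sup>2)"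
    unfolding Qd_def u by (subst sum.union_disjoint) (auto simp: u2 Tmat_def)
  also have "(\<Sum>m\<in>{1..<n}. (Tmat m n)\<^sup>2) = H2 (n-1)"
    unfolding H2_def
  proof (rule sum.reindex_bij_witness[of _ "\<lambda>j. n-1-j" "\<lambda>m. n-1-m"])
    fix m assume "m \<in> {1..<n}"
    thus "1 / (real (n - 1 - m) + 1)\<^sup>2 = (Tmat m n)\<^sup>2"
      by (auto simp: Tmat_def of_nat_diff power2_eq_square algebra_simps)
  qed auto
  also have "(\<Sum>m\<in>{Suc n..R}. (Tmat m n)\<^sup>2) = H2 (R-n)"
    unfolding H2_def
  proof (rule sum.reindex_bij_witness[of _ "\<lambda>j. n+1+j" "\<lambda>m. m-n-1"])
    fix m assume "m \<in> {Suc n..R}"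
    thus "1 / (real (m - n - 1) + 1)\<^sup>2 = (Tmat m n)\<^sup>2"
      by (auto simp: Tmat_def of_nat_diff power2_eq_square algebra_simps)
  qed auto
  finally show ?thesis .
qed

lemma recip_ineq: fixes a b :: real assumes "a > 0" "b > 0" shows "4 / (a + b) \<le> 1 / a + 1 / b"
proof -
  have "1 / a + 1 / b - 4 / (a + b) = (a - b)\<^sup>2 / (a * b * (a + b))"
    using assms by (simp add: field_simps power2_eq_square)
  moreover have "(a - b)\<^sup>2 / (a * b * (a + b)) \<ge> 0" using assms by simp
  ultimately show ?thesis by linarith
qed

lemma Qd_nonneg: "Qd R n \<ge> 0" by (simp add: Qd_def sum_nonneg)

lemma Qd_lt: assumes "n \<in> {1..R}" shows "Qd R n < pi\<^sup>2 / 3 - 4 / (real R + 1)"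
proof -
  have n: "1 \<le> n" "n \<le> R" using assms by auto
  have "H2 (n-1) + 1 / (real (n-1) + 1) < pi\<^sup>2 / 6" by (rule H2_upper)
  hence a: "H2 (n-1) < pi\<^sup>2 / 6 - 1 / real n" using n by (simp add: of_nat_diff)
  have "H2 (R-n) + 1 / (real (R-n) + 1) < pi\<^sup>2 / 6" by (rule H2_upper)
  hence b: "H2 (R-n) < pi\<^sup>2 / 6 - 1 / (real R - real n + 1)" using n by (simp add: of_nat_diff)
  have "4 / (real n + (real R - real n + 1)) \<le> 1 / real n + 1 / (real R - real n + 1)"
    using n by (intro recip_ineq) auto
  hence "4 / (real R + 1) \<le> 1 / real n + 1 / (real R - real n + 1)" by simp
  thus ?thesis using a b Qd_H2[OF n] by simp
qed

lemma gen_bound: assumes "R \<ge> 1"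
  shows "(mat_opnorm R Tmat)\<^sup>2 < pi\<^sup>2 - 12 / (real R + 1)" "mat_opnorm R Tmat \<ge> 0"
proof -
  define c where "c = Max (Qd R ` {1..R})"
  have ne: "Qd R ` {1..R} \<noteq> {}" using assms by auto
  have Q: "\<forall>n\<in>{1..R}. Qd R n \<le> c" unfolding c_def by auto
  have "Qd R 1 \<le> c" using Q assms by auto
  hence c0: "c \<ge> 0" using Qd_nonneg[of R 1] by linarith
  have "c \<in> Qd R ` {1..R}" unfolding c_def using ne by (intro Max_in) auto
  then obtain n where "n \<in> {1..R}" "c = Qd R n" by auto
  hence clt: "c < pi\<^sup>2 / 3 - 4 / (real R + 1)" using Qd_lt by simp
  have N: "mat_opnorm R Tmat \<le> sqrt (3 * c)" "mat_opnorm R Tmat \<ge> 0"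
    using opnorm_bound[OF Q c0] by auto
  show "mat_opnorm R Tmat \<ge> 0" by (rule N(2))
  have "(mat_opnorm R Tmat)\<^sup>2 \<le> (sqrt (3 * c))\<^sup>2" using N by (intro power_mono) auto
  also have "\<dots> = 3 * c" using c0 by simp
  also have "\<dots> < pi\<^sup>2 - 12 / (real R + 1)" using clt by simp
  finally show "(mat_opnorm R Tmat)\<^sup>2 < pi\<^sup>2 - 12 / (real R + 1)" .
qed

lemma small_case: assumes "R \<ge> 1" "\<forall>n\<in>{1..R}. Qd R n \<le> c" "c \<ge> 0"
  and "3 * c \<le> (pi - pi / (2 * real R))\<^sup>2"
  shows "pi - mat_opnorm R Tmat \<ge> pi / (2 * real R)"
proof -
  have "pi / (2 * real R) \<le> pi / 2" using assms(1) pi_gt_zero by (intro divide_left_mono) auto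
  hence nn: "pi - pi / (2 * real R) \<ge> 0" using pi_gt_zero by linarith
  have "mat_opnorm R Tmat \<le> sqrt (3 * c)" using opnorm_bound[OF assms(2,3)] by auto
  also have "\<dots> \<le> sqrt ((pi - pi / (2 * real R))\<^sup>2)" by (rule real_sqrt_le_mono[OF assms(4)])
  also have "\<dots> = pi - pi / (2 * real R)" using nn by simp
  finally show ?thesis by simp
qed

lemma big_case: assumes "R \<ge> 5" shows "pi - mat_opnorm R Tmat \<ge> pi / (2 * real R)"
proof -
  have R1: "R \<ge> 1" using assms by simp
  note B = gen_bound[OF R1]
  define r where "r = real R"
  have r5: "r \<ge> 5" using assms unfolding r_def by simp
  have P: "pi\<^sup>2 \<le> 21/2" by (rule pi2_upper)
  have "pi\<^sup>2 * (4*r - 1) * (r + 1) \<le> 21/2 * (4*r - 1) * (r + 1)"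
    using P r5 by (intro mult_right_mono) auto
  also have "\<dots> \<le> 48 * r\<^sup>2"
  proof -
    have "(r-5)*(12*r - 3) \<ge> 0" using r5 by (intro mult_nonneg_nonneg) auto
    moreover have "(r-5)*(12*r - 3) = 12*r\<^sup>2 - 63*r + 15" by (simp add: power2_eq_square algebra_simps)
    moreover have "21/2 * (4*r - 1) * (r + 1) = 42*r\<^sup>2 + 63/2*r - 21/2" by (simp add: power2_eq_square field_simps)
    ultimately show ?thesis by linarith
  qed
  finally have key: "pi\<^sup>2 * (4*r - 1) * (r + 1) \<le> 48 * r\<^sup>2" .
  have "pi\<^sup>2 - 12 / (r + 1) \<le> (pi - pi / (2 * r))\<^sup>2"
  proof -
    have "(pi - pi / (2 * r))\<^sup>2 - (pi\<^sup>2 - 12 / (r + 1)) = (48 * r\<^sup>2 - pi\<^sup>2 * (4*r - 1) * (r + 1)) / (4 * r\<^sup>2 * (r + 1))"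
      using r5 by (simp add: field_simps power2_eq_square)
    moreover have "(48 * r\<^sup>2 - pi\<^sup>2 * (4*r - 1) * (r + 1)) / (4 * r\<^sup>2 * (r + 1)) \<ge> 0"
      using key r5 by (intro divide_nonneg_pos) auto
    ultimately show ?thesis by linarith
  qed
  hence lt: "(mat_opnorm R Tmat)\<^sup>2 \<le> (pi - pi / (2 * real R))\<^sup>2" using B(1) unfolding r_def by linarith
  have "pi / (2 * real R) \<le> pi / 2" using R1 pi_gt_zero by (intro divide_left_mono) auto
  hence nn: "pi - pi / (2 * real R) \<ge> 0" using pi_gt_zero by linarith
  have "mat_opnorm R Tmat \<le> pi - pi / (2 * real R)" using power2_le_imp_le[OF lt nn] .
  thus ?thesis by simp
qed

theorem mainTheorem14:
  shows "(\<forall>S::nat. S \<ge> 1 \<longrightarrow>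
            (mat_opnorm (2 * S + 1) Tmat)\<^sup>2 < pi\<^sup>2 - 6 / (real S + 1))
       \<and> (\<forall>R::nat. R \<ge> 1 \<longrightarrow> pi - mat_opnorm R Tmat \<ge> pi / (2 * real R))"
proof (intro conjI allI impI)
  fix S :: nat assume "S \<ge> 1"
  have "(mat_opnorm (2 * S + 1) Tmat)\<^sup>2 < pi\<^sup>2 - 12 / (real (2 * S + 1) + 1)"
    by (rule gen_bound) simp
  also have "12 / (real (2 * S + 1) + 1) = 6 / (real S + 1)" by (simp add: field_simps)
  finally show "(mat_opnorm (2 * S + 1) Tmat)\<^sup>2 < pi\<^sup>2 - 6 / (real S + 1)" .
next
  fix R :: nat assume R: "R \<ge> 1"
  have p3: "pi > 3" by (rule pi_gt3)
  show "pi - mat_opnorm R Tmat \<ge> pi / (2 * real R)"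
  proof (cases "R \<ge> 5")
    case True thus ?thesis by (rule big_case)
  next
    case False
    hence "R = 1 \<or> R = 2 \<or> R = 3 \<or> R = 4" using R by auto
    thus ?thesis
    proof (elim disjE)
      assume R1: "R = 1"
      show ?thesis unfolding R1
      proof (rule small_case[where c = 0])
        show "\<forall>n\<in>{1..1}. Qd 1 n \<le> 0" by (simp add: Qd_def)
      qed auto
    next
      assume R2: "R = 2"
      show ?thesis unfolding R2
      proof (rule small_case[where c = 1])
        show "\<forall>n\<in>{1..2}. Qd 2 n \<le> 1"
        proof
          fix n assume "n \<in> {1..(2::nat)}"
          hence "n = 1 \<or> n = 2" by auto
          thus "Qd 2 n \<le> 1" by (elim disjE; simp add: Qd_H2 H2_def eval_nat_numeral)
        qed
        have "(9/4::real) \<le> pi - pi / (2 * real (2::nat))" using p3 by simp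
        hence "(9/4::real)\<^sup>2 \<le> (pi - pi / (2 * real (2::nat)))\<^sup>2" by (intro power_mono) auto
        thus "3 * 1 \<le> (pi - pi / (2 * real (2::nat)))\<^sup>2" by (simp add: power2_eq_square)
      qed auto
    next
      assume R3: "R = 3"
      show ?thesis unfolding R3
      proof (rule small_case[where c = 2])
        show "\<forall>n\<in>{1..3}. Qd 3 n \<le> 2"
        proof
          fix n assume "n \<in> {1..(3::nat)}"
          hence "n = 1 \<or> n = 2 \<or> n = 3" by auto
          thus "Qd 3 n \<le> 2" by (elim disjE; simp add: Qd_H2 H2_def eval_nat_numeral)
        qed
        have "(5/2::real) \<le> pi - pi / (2 * real (3::nat))" using p3 by simp
        hence "(5/2::real)\<^sup>2 \<le> (pi - pi / (2 * real (3::nat)))\<^sup>2" by (intro power_mono) auto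
        thus "3 * 2 \<le> (pi - pi / (2 * real (3::nat)))\<^sup>2" by (simp add: power2_eq_square)
      qed auto
    next
      assume R4: "R = 4"
      show ?thesis unfolding R4
      proof (rule small_case[where c = "9/4"])
        show "\<forall>n\<in>{1..4}. Qd 4 n \<le> 9/4"
        proof
          fix n assume "n \<in> {1..(4::nat)}"
          hence "n = 1 \<or> n = 2 \<or> n = 3 \<or> n = 4" by auto
          thus "Qd 4 n \<le> 9/4" by (elim disjE; simp add: Qd_H2 H2_def eval_nat_numeral)
        qed
        have "(21/8::real) \<le> pi - pi / (2 * real (4::nat))" using p3 by simp
        hence "(21/8::real)\<^sup>2 \<le> (pi - pi / (2 * real (4::nat)))\<^sup>2" by (intro power_mono) auto
        thus "3 * (9/4) \<le> (pi - pi / (2 * real (4::nat)))\<^sup>2" by (simp add: power2_eq_square)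
      qed auto
    qed
  qed
qed

end
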